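(* Let $|\psi\rangle$ be a normalized pure three-qubit state such that the reduced density matrix of one of its qubits is maximally mixed (equal to $\frac12 I$). Then $G(|\psi\rangle)^2=\frac12$. In particular $G(|\mathrm{GHZ}\rangle)^2=\frac12$ for $|\mathrm{GHZ}\rangle=\frac{1}{\sqrt2}(|000\rangle+|111\rangle)$.
   Context: For a normalized pure three-qubit state, $G(|\psi\rangle):=\max|\langle a|\langle b|\langle c|\psi\rangle|$ over all normalized single-qubit states $|a\rangle,|b\rangle,|c\rangle$. *)

theory Defs
  imports Complex_Main
begin

text \<open>Computational basis of a qubit indexed by bool (False = 0, True = 1).\<close>

definition qubit_normalized :: "(bool \<Rightarrow> complex) \<Rightarrow> bool" where
  "qubit_normalized a \<longleftrightarrow> (\<Sum>i\<in>UNIV. (cmod (a i))\<^sup>2) = 1"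

definition state3_normalized :: "(bool \<Rightarrow> bool \<Rightarrow> bool \<Rightarrow> complex) \<Rightarrow> bool" where
  "state3_normalized \<psi> \<longleftrightarrow> (\<Sum>i\<in>UNIV. \<Sum>j\<in>UNIV. \<Sum>k\<in>UNIV. (cmod (\<psi> i j k))\<^sup>2) = 1"

definition overlap3 :: "(bool \<Rightarrow> complex) \<Rightarrow> (bool \<Rightarrow> complex) \<Rightarrow> (bool \<Rightarrow> complex)
    \<Rightarrow> (bool \<Rightarrow> bool \<Rightarrow> bool \<Rightarrow> complex) \<Rightarrow> complex" where
  "overlap3 a b c \<psi> = (\<Sum>i\<in>UNIV. \<Sum>j\<in>UNIV. \<Sum>k\<in>UNIV.
      cnj (a i) * cnj (b j) * cnj (c k) * \<psi> i j k)"

definition G :: "(bool \<Rightarrow> bool \<Rightarrow> bool \<Rightarrow> complex) \<Rightarrow> real" where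
  "G \<psi> = (SUP abc \<in> {(a, b, c). qubit_normalized a \<and> qubit_normalized b \<and> qubit_normalized c}.
      cmod (overlap3 (fst abc) (fst (snd abc)) (snd (snd abc)) \<psi>))"

definition rho1 :: "(bool \<Rightarrow> bool \<Rightarrow> bool \<Rightarrow> complex) \<Rightarrow> bool \<Rightarrow> bool \<Rightarrow> complex" where
  "rho1 \<psi> i i' = (\<Sum>j\<in>UNIV. \<Sum>k\<in>UNIV. \<psi> i j k * cnj (\<psi> i' j k))"

definition rho2 :: "(bool \<Rightarrow> bool \<Rightarrow> bool \<Rightarrow> complex) \<Rightarrow> bool \<Rightarrow> bool \<Rightarrow> complex" where
  "rho2 \<psi> j j' = (\<Sum>i\<in>UNIV. \<Sum>k\<in>UNIV. \<psi> i j k * cnj (\<psi> i j' k))"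

definition rho3 :: "(bool \<Rightarrow> bool \<Rightarrow> bool \<Rightarrow> complex) \<Rightarrow> bool \<Rightarrow> bool \<Rightarrow> complex" where
  "rho3 \<psi> k k' = (\<Sum>i\<in>UNIV. \<Sum>j\<in>UNIV. \<psi> i j k * cnj (\<psi> i j k'))"

definition half_identity :: "bool \<Rightarrow> bool \<Rightarrow> complex" where
  "half_identity i i' = (if i = i' then 1/2 else 0)"

definition GHZ :: "bool \<Rightarrow> bool \<Rightarrow> bool \<Rightarrow> complex" where
  "GHZ i j k = (if i = j \<and> j = k then complex_of_real (1 / sqrt 2) else 0)"

end

theory Submission
  imports Defs
begin

definition chi :: "(bool \<Rightarrow> complex) \<Rightarrow> (bool \<Rightarrow> bool \<Rightarrow> bool \<Rightarrow> complex) \<Rightarrow> bool \<Rightarrow> bool \<Rightarrow> complex" where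
  "chi \<alpha> \<psi> j k = \<alpha> False * \<psi> False j k + \<alpha> True * \<psi> True j k"

lemma overlap_chi: "overlap3 a b c \<psi> = (\<Sum>j\<in>UNIV. \<Sum>k\<in>UNIV. cnj (b j) * cnj (c k) * chi (\<lambda>i. cnj (a i)) \<psi> j k)"
  by (simp add: overlap3_def chi_def UNIV_bool algebra_simps)

lemma chi_norm:
  assumes "rho1 \<psi> = half_identity"
  shows "(\<Sum>j\<in>UNIV. \<Sum>k\<in>UNIV. (cmod (chi \<alpha> \<psi> j k))\<^sup>2) = ((cmod (\<alpha> False))\<^sup>2 + (cmod (\<alpha> True))\<^sup>2) / 2"
proof -
  have h: "rho1 \<psi> i i' = half_identity i i'" for i i' using assms by simp
  have "complex_of_real (\<Sum>j\<in>UNIV. \<Sum>k\<in>UNIV. (cmod (chi \<alpha> \<psi> j k))\<^sup>2)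
     = (\<Sum>j\<in>UNIV. \<Sum>k\<in>UNIV. chi \<alpha> \<psi> j k * cnj (chi \<alpha> \<psi> j k))"
    by (simp only: of_real_sum complex_norm_square)
  also have "\<dots> = \<alpha> False * cnj (\<alpha> False) * rho1 \<psi> False False + \<alpha> False * cnj (\<alpha> True) * rho1 \<psi> False True
     + \<alpha> True * cnj (\<alpha> False) * rho1 \<psi> True False + \<alpha> True * cnj (\<alpha> True) * rho1 \<psi> True True"
    by (simp add: rho1_def chi_def UNIV_bool algebra_simps)
  also have "\<dots> = (\<alpha> False * cnj (\<alpha> False) + \<alpha> True * cnj (\<alpha> True)) / 2"
    by (simp add: h half_identity_def field_simps)
  also have "\<dots> = (complex_of_real ((cmod (\<alpha> False))\<^sup>2) + complex_of_real ((cmod (\<alpha> True))\<^sup>2)) / 2"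
    by (simp only: complex_norm_square)
  also have "\<dots> = complex_of_real (((cmod (\<alpha> False))\<^sup>2 + (cmod (\<alpha> True))\<^sup>2) / 2)"
    by simp
  finally show ?thesis using of_real_eq_iff by blast
qed

lemma cs4: "((x1::real)*y1+(x2*y2+(x3*y3+x4*y4)))\<^sup>2 \<le> (x1\<^sup>2+(x2\<^sup>2+(x3\<^sup>2+x4\<^sup>2)))*(y1\<^sup>2+(y2\<^sup>2+(y3\<^sup>2+y4\<^sup>2)))"
proof -
  have "(x1\<^sup>2+(x2\<^sup>2+(x3\<^sup>2+x4\<^sup>2)))*(y1\<^sup>2+(y2\<^sup>2+(y3\<^sup>2+y4\<^sup>2))) - (x1*y1+(x2*y2+(x3*y3+x4*y4)))\<^sup>2
    = (x1*y2-x2*y1)\<^sup>2 + (x1*y3-x3*y1)\<^sup>2 + (x1*y4-x4*y1)\<^sup>2 + (x2*y3-x3*y2)\<^sup>2 + (x2*y4-x4*y2)\<^sup>2 + (x3*y4-x4*y3)\<^sup>2"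
    by (simp add: power2_eq_square algebra_simps)
  moreover have "\<dots> \<ge> 0" by simp
  ultimately show ?thesis by linarith
qed

lemma upper:
  assumes "rho1 \<psi> = half_identity" "qubit_normalized a" "qubit_normalized b" "qubit_normalized c"
  shows "(cmod (overlap3 a b c \<psi>))\<^sup>2 \<le> 1/2"
proof -
  define X where "X = chi (\<lambda>i. cnj (a i)) \<psi>"
  have nX: "(\<Sum>j\<in>UNIV. \<Sum>k\<in>UNIV. (cmod (X j k))\<^sup>2) = 1/2"
    using chi_norm[OF assms(1), of "\<lambda>i. cnj (a i)"] assms(2)
    by (simp add: X_def qubit_normalized_def UNIV_bool)
  have nb: "(cmod (b False))\<^sup>2 + (cmod (b True))\<^sup>2 = 1" using assms(3) by (simp add: qubit_normalized_def UNIV_bool)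
  have nc: "(cmod (c False))\<^sup>2 + (cmod (c True))\<^sup>2 = 1" using assms(4) by (simp add: qubit_normalized_def UNIV_bool)
  let ?u = "\<lambda>j k. cmod (b j) * cmod (c k)"
  have "cmod (overlap3 a b c \<psi>) \<le> (\<Sum>j\<in>UNIV. \<Sum>k\<in>UNIV. ?u j k * cmod (X j k))"
  proof -
    have "overlap3 a b c \<psi> = (\<Sum>j\<in>UNIV. \<Sum>k\<in>UNIV. cnj (b j) * cnj (c k) * X j k)"
      by (simp add: overlap_chi X_def)
    also have "cmod \<dots> \<le> (\<Sum>j\<in>UNIV. \<Sum>k\<in>UNIV. ?u j k * cmod (X j k))"
      by (simp add: UNIV_bool norm_mult) (smt (verit) norm_mult norm_triangle_ineq norm_triangle_mono complex_mod_cnj)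
    finally show ?thesis .
  qed
  hence "(cmod (overlap3 a b c \<psi>))\<^sup>2 \<le> (\<Sum>j\<in>UNIV. \<Sum>k\<in>UNIV. ?u j k * cmod (X j k))\<^sup>2"
    by (simp add: power_mono)
  also have "\<dots> \<le> (\<Sum>j\<in>UNIV. \<Sum>k\<in>UNIV. (?u j k)\<^sup>2) * (\<Sum>j\<in>UNIV. \<Sum>k\<in>UNIV. (cmod (X j k))\<^sup>2)"
    using cs4[of "cmod (b False) * cmod (c False)" "cmod (X False False)" "cmod (b False) * cmod (c True)" "cmod (X False True)"
     "cmod (b True) * cmod (c False)" "cmod (X True False)" "cmod (b True) * cmod (c True)" "cmod (X True True)"]
    by (simp add: UNIV_bool add.assoc)
  also have "(\<Sum>j\<in>UNIV. \<Sum>k\<in>UNIV. (?u j k)\<^sup>2) = 1"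
  proof -
    have "(\<Sum>j\<in>UNIV. \<Sum>k\<in>UNIV. (?u j k)\<^sup>2) = ((cmod (b False))\<^sup>2 + (cmod (b True))\<^sup>2) * ((cmod (c False))\<^sup>2 + (cmod (c True))\<^sup>2)"
      by (simp add: UNIV_bool power_mult_distrib algebra_simps)
    then show ?thesis using nb nc by simp
  qed
  finally show ?thesis using nX by simp
qed


lemma quad_root: "\<exists>u v :: complex. (u \<noteq> 0 \<or> v \<noteq> 0) \<and> A*u^2 + B*u*v + C*v^2 = 0"
proof (cases "A = 0")
  case True then show ?thesis by (intro exI[of _ 1] exI[of _ 0]) simp
next
  case False
  define s where "s = csqrt (B^2 - 4*A*C)"
  have s2: "s^2 = B^2 - 4*A*C" by (simp add: s_def)
  define u where "u = (s - B) / (2*A)"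
  have "A*u^2 + B*u*1 + C*1^2 = (s^2 - B^2 + 4*A*C) / (4*A)"
    using False by (simp add: u_def field_simps power2_eq_square)
  also have "\<dots> = 0" using s2 by simp
  finally show ?thesis by (intro exI[of _ u] exI[of _ 1]) simp
qed

lemma rank1:
  fixes M :: "bool \<Rightarrow> bool \<Rightarrow> complex"
  assumes det: "M False False * M True True = M False True * M True False"
    and nz: "M j0 k0 \<noteq> 0"
  shows "\<exists>x y. \<forall>j k. M j k = x j * y k"
proof -
  have key: "M j k * M j0 k0 = M j k0 * M j0 k" for j k
    using det by (cases j; cases k; cases j0; cases k0) (simp_all add: algebra_simps)
  show ?thesis
  proof (intro exI allI)
    fix j k
    show "M j k = M j k0 * (M j0 k / M j0 k0)"
      using key[of j k] nz by (simp add: field_simps)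
  qed
qed

lemma det_chi: "chi \<alpha> \<psi> False False * chi \<alpha> \<psi> True True - chi \<alpha> \<psi> False True * chi \<alpha> \<psi> True False
  = (\<psi> False False False * \<psi> False True True - \<psi> False False True * \<psi> False True False) * (\<alpha> False)^2
  + (\<psi> False False False * \<psi> True True True + \<psi> True False False * \<psi> False True True
     - \<psi> False False True * \<psi> True True False - \<psi> True False True * \<psi> False True False) * \<alpha> False * \<alpha> True
  + (\<psi> True False False * \<psi> True True True - \<psi> True False True * \<psi> True True False) * (\<alpha> True)^2"
  by (simp add: chi_def power2_eq_square algebra_simps)

lemma lower:
  assumes "rho1 \<psi> = half_identity"
  shows "\<exists>a b c. qubit_normalized a \<and> qubit_normalized b \<and> qubit_normalized c \<and> (cmod (overlap3 a b c \<psi>))\<^sup>2 = 1/2"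
proof -
  obtain u v where uv: "u \<noteq> 0 \<or> v \<noteq> 0"
    and q: "(\<psi> False False False * \<psi> False True True - \<psi> False False True * \<psi> False True False) * u^2
  + (\<psi> False False False * \<psi> True True True + \<psi> True False False * \<psi> False True True
     - \<psi> False False True * \<psi> True True False - \<psi> True False True * \<psi> False True False) * u * v
  + (\<psi> True False False * \<psi> True True True - \<psi> True False True * \<psi> True True False) * v^2 = 0"
    using quad_root by blast
  define n where "n = sqrt ((cmod u)^2 + (cmod v)^2)"
  have npos: "n > 0" using uv by (auto simp: n_def add_pos_nonneg add_nonneg_pos)
  define \<alpha> where "\<alpha> = (\<lambda>i. if i then v / of_real n else u / of_real n)"
  have n2: "n^2 = (cmod u)^2 + (cmod v)^2" by (simp add: n_def)
  have anorm: "(cmod (\<alpha> False))\<^sup>2 + (cmod (\<alpha> True))\<^sup>2 = 1"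
    using npos n2 uv by (simp add: \<alpha>_def norm_divide power_divide add_divide_distrib[symmetric])
  define X where "X = chi \<alpha> \<psi>"
  have detX: "X False False * X True True = X False True * X True False"
  proof -
    define A where "A = \<psi> False False False * \<psi> False True True - \<psi> False False True * \<psi> False True False"
    define B where "B = \<psi> False False False * \<psi> True True True + \<psi> True False False * \<psi> False True True
     - \<psi> False False True * \<psi> True True False - \<psi> True False True * \<psi> False True False"
    define C where "C = \<psi> True False False * \<psi> True True True - \<psi> True False True * \<psi> True True False"
    have n0: "complex_of_real n \<noteq> 0" using npos by simp
    have "X False False * X True True - X False True * X True False
       = A * (u / of_real n)^2 + B * (u / of_real n) * (v / of_real n) + C * (v / of_real n)^2"
      unfolding X_def det_chi A_def B_def C_def by (simp add: \<alpha>_def)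
    also have "\<dots> = (A*u^2 + B*u*v + C*v^2) / (of_real n)^2"
      using n0 by (simp add: field_simps power2_eq_square)
    also have "\<dots> = 0" using q by (simp add: A_def B_def C_def)
    finally show ?thesis by simp
  qed
  have nX: "(\<Sum>j\<in>UNIV. \<Sum>k\<in>UNIV. (cmod (X j k))\<^sup>2) = 1/2"
    using chi_norm[OF assms, of \<alpha>] anorm by (simp add: X_def)
  obtain j0 k0 where nz: "X j0 k0 \<noteq> 0"
  proof (rule ccontr)
    assume "\<not> thesis"
    then have "X j k = 0" for j k using that by blast
    then show False using nX by simp
  qed
  obtain x y where xy: "\<And>j k. X j k = x j * y k" using rank1[OF detX nz] by blast
  define nx where "nx = sqrt ((cmod (x False))^2 + (cmod (x True))^2)"
  define ny where "ny = sqrt ((cmod (y False))^2 + (cmod (y True))^2)"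
  have nxy: "(nx * ny)^2 = 1/2"
  proof -
    have "(nx*ny)^2 = ((cmod (x False))^2 + (cmod (x True))^2) * ((cmod (y False))^2 + (cmod (y True))^2)"
      by (simp add: nx_def ny_def power_mult_distrib)
    also have "\<dots> = (\<Sum>j\<in>UNIV. \<Sum>k\<in>UNIV. (cmod (X j k))\<^sup>2)"
      by (simp add: xy UNIV_bool norm_mult power_mult_distrib algebra_simps)
    finally show ?thesis using nX by simp
  qed
  have nxpos: "nx > 0" and nypos: "ny > 0"
  proof -
    have "nx \<ge> 0" "ny \<ge> 0" by (simp_all add: nx_def ny_def)
    moreover have "nx \<noteq> 0" "ny \<noteq> 0" using nxy by auto
    ultimately show "nx > 0" "ny > 0" by auto
  qed
  define a where "a = (\<lambda>i. cnj (\<alpha> i))"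
  define b where "b = (\<lambda>j. x j / of_real nx)"
  define c where "c = (\<lambda>k. y k / of_real ny)"
  have na: "qubit_normalized a" using anorm by (simp add: qubit_normalized_def a_def UNIV_bool)
  have xnz: "x False \<noteq> 0 \<or> x True \<noteq> 0" using nxpos by (auto simp: nx_def)
  have ynz: "y False \<noteq> 0 \<or> y True \<noteq> 0" using nypos by (auto simp: ny_def)
  have nb: "qubit_normalized b" using nxpos xnz
    by (simp add: qubit_normalized_def b_def UNIV_bool norm_divide power_divide nx_def add_divide_distrib[symmetric])
  have nc: "qubit_normalized c" using nypos ynz
    by (simp add: qubit_normalized_def c_def UNIV_bool norm_divide power_divide ny_def add_divide_distrib[symmetric])
  have ov: "overlap3 a b c \<psi> = of_real (nx * ny)"
  proof -
    have ca: "(\<lambda>i. cnj (a i)) = \<alpha>" by (simp add: a_def)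
    have cn: "cnj z * z = complex_of_real ((cmod z)^2)" for z by (metis complex_norm_square mult.commute)
    have "overlap3 a b c \<psi> = (\<Sum>j\<in>UNIV. \<Sum>k\<in>UNIV. cnj (b j) * cnj (c k) * (x j * y k))"
      by (simp add: overlap_chi ca xy[symmetric] X_def)
    also have "\<dots> = (\<Sum>j\<in>UNIV. \<Sum>k\<in>UNIV. (cnj (x j) * x j) * (cnj (y k) * y k)) / (of_real nx * of_real ny)"
      by (simp add: b_def c_def UNIV_bool algebra_simps add_divide_distrib)
    also have "\<dots> = of_real (((cmod (x False))^2 + (cmod (x True))^2) * ((cmod (y False))^2 + (cmod (y True))^2)) / (of_real nx * of_real ny)"
      by (simp only: cn) (simp add: UNIV_bool algebra_simps)
    also have "\<dots> = of_real ((nx * ny)^2 / (nx * ny))"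
      by (simp add: nx_def ny_def power_mult_distrib)
    also have "\<dots> = of_real (nx * ny)" using nxpos nypos by (simp add: power2_eq_square)
    finally show ?thesis .
  qed
  have "(cmod (overlap3 a b c \<psi>))\<^sup>2 = 1/2" using ov nxy nxpos nypos by (simp add: norm_mult abs_of_pos power_mult_distrib)
  then show ?thesis using na nb nc by blast
qed


definition P :: "(bool \<Rightarrow> bool \<Rightarrow> bool \<Rightarrow> complex) \<Rightarrow> bool" where
  "P \<psi> \<longleftrightarrow> (\<forall>a b c. qubit_normalized a \<and> qubit_normalized b \<and> qubit_normalized c \<longrightarrow> (cmod (overlap3 a b c \<psi>))\<^sup>2 \<le> 1/2)
     \<and> (\<exists>a b c. qubit_normalized a \<and> qubit_normalized b \<and> qubit_normalized c \<and> (cmod (overlap3 a b c \<psi>))\<^sup>2 = 1/2)"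

lemma P_rho1: "rho1 \<psi> = half_identity \<Longrightarrow> P \<psi>"
  unfolding P_def using upper lower by blast

lemma P_G: assumes "P \<psi>" shows "(G \<psi>)\<^sup>2 = 1/2"
proof -
  let ?S = "{(a, b, c). qubit_normalized a \<and> qubit_normalized b \<and> qubit_normalized c}"
  let ?f = "\<lambda>abc. cmod (overlap3 (fst abc) (fst (snd abc)) (snd (snd abc)) \<psi>)"
  obtain a b c where abc: "qubit_normalized a" "qubit_normalized b" "qubit_normalized c"
    "(cmod (overlap3 a b c \<psi>))\<^sup>2 = 1/2" using assms unfolding P_def by blast
  have "Sup (?f ` ?S) = sqrt (1/2)"
  proof (rule cSup_eq_maximum)
    have "sqrt (1/2) = ?f (a, b, c)" using abc(4) by (metis real_sqrt_abs abs_norm_cancel fst_conv snd_conv)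
    then show "sqrt (1/2) \<in> ?f ` ?S" by (rule image_eqI) (use abc in auto)
  next
    fix y assume "y \<in> ?f ` ?S"
    then obtain a b c where "qubit_normalized a" "qubit_normalized b" "qubit_normalized c"
      "y = cmod (overlap3 a b c \<psi>)" by auto
    then show "y \<le> sqrt (1/2)" using assms unfolding P_def by (simp add: real_le_rsqrt)
  qed
  then show ?thesis by (simp add: G_def)
qed

lemma P_swap12: "P (\<lambda>i j k. \<psi> j i k) \<Longrightarrow> P \<psi>"
proof -
  have e: "overlap3 a b c (\<lambda>i j k. \<psi> j i k) = overlap3 b a c \<psi>" for a b c
    by (simp add: overlap3_def UNIV_bool algebra_simps)
  show "P (\<lambda>i j k. \<psi> j i k) \<Longrightarrow> P \<psi>" unfolding P_def e by blast
qed

lemma P_swap13: "P (\<lambda>i j k. \<psi> k j i) \<Longrightarrow> P \<psi>"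
proof -
  have e: "overlap3 a b c (\<lambda>i j k. \<psi> k j i) = overlap3 c b a \<psi>" for a b c
    by (simp add: overlap3_def UNIV_bool algebra_simps)
  show "P (\<lambda>i j k. \<psi> k j i) \<Longrightarrow> P \<psi>" unfolding P_def e by blast
qed

lemma rho_swap12: "rho1 (\<lambda>i j k. \<psi> j i k) = rho2 \<psi>"
  by (simp add: rho1_def rho2_def UNIV_bool fun_eq_iff algebra_simps)

lemma rho_swap13: "rho1 (\<lambda>i j k. \<psi> k j i) = rho3 \<psi>"
  by (simp add: rho1_def rho3_def UNIV_bool fun_eq_iff algebra_simps)

lemma GHZ_rho1: "rho1 GHZ = half_identity"
proof -
  have h: "complex_of_real (1/sqrt 2) * complex_of_real (1/sqrt 2) = 1/2"
  proof -
    have "(1/sqrt 2) * (1/sqrt 2) = (1/2::real)" by simp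
    then have "complex_of_real ((1/sqrt 2) * (1/sqrt 2)) = 1/2" by simp
    then show ?thesis by (simp only: of_real_mult)
  qed
  have h2: "complex_of_real (sqrt 2) * complex_of_real (sqrt 2) = 2"
    by (simp only: of_real_mult[symmetric]) simp
  show ?thesis by (simp add: rho1_def GHZ_def half_identity_def UNIV_bool fun_eq_iff h h2)
qed

theorem mainTheorem5:
  fixes \<psi> :: "bool \<Rightarrow> bool \<Rightarrow> bool \<Rightarrow> complex"
  assumes "state3_normalized \<psi>"
    and "rho1 \<psi> = half_identity \<or> rho2 \<psi> = half_identity \<or> rho3 \<psi> = half_identity"
  shows "(G \<psi>)\<^sup>2 = 1/2 \<and> (G GHZ)\<^sup>2 = 1/2"
proof
  have "P \<psi>" using assms(2)
  proof (elim disjE)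
    assume "rho1 \<psi> = half_identity" then show ?thesis by (rule P_rho1)
  next
    assume h: "rho2 \<psi> = half_identity" show ?thesis
      by (rule P_swap12, rule P_rho1) (simp add: rho_swap12 h)
  next
    assume h: "rho3 \<psi> = half_identity" show ?thesis
      by (rule P_swap13, rule P_rho1) (simp add: rho_swap13 h)
  qed
  then show "(G \<psi>)\<^sup>2 = 1/2" by (rule P_G)
  show "(G GHZ)\<^sup>2 = 1/2" by (rule P_G[OF P_rho1[OF GHZ_rho1]])
qed

end
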